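(* Under the standing setup and the algorithm/assumptions described in the context, there exists a constant $\chi>0$ such that for every pair of integers $1\le\underline{k}\le\overline{k}$, $$\min_{\underline{k}\le n\le\overline{k}}\mathcal{M}_{\bar\gamma}^{F_n,\phi}(x_n)\ \le\ \sqrt{\frac{\chi}{\sum_{n=\underline{k}}^{\overline{k}}\mu_n}}.$$
   Context: Standing setup: $\mathcal{X},\mathcal{Z}$ finite-dimensional real Hilbert spaces; $\phi:\mathcal{X}\to\mathbb{R}\cup\{+\infty\}$ proper lower semicontinuous convex; $h:\mathcal{X}\to\mathbb{R}$ differentiable with $\nabla h$ Lipschitz on $\mathrm{dom}\,\phi$; $\mathfrak{S}:\mathcal{X}\to\mathcal{Z}$ continuously differentiable; $g:\mathcal{Z}\to\mathbb{R}$ Lipschitz with constant $L_g>0$ and $\eta$-weakly convex ($g+\frac\eta2\|\cdot\|^2$ convex, $\eta>0$); $F:=h+g\circ\mathfrak{S}$ and $\mathrm{argmin}_x(F+\phi)\ne\emptyset$. Notation: $\mathrm{prox}_{\gamma\phi}(\bar x)=\mathrm{argmin}_x(\phi(x)+\frac1{2\gamma}\|x-\bar x\|^2)$; Moreau envelope ${}^{\mu}g(\bar z)=\min_z(g(z)+\frac1{2\mu}\|z-\bar z\|^2)$ for $\mu\in(0,\eta^{-1})$ (continuously differentiable). $F_n:=h+{}^{\mu_n}g\circ\mathfrak{S}$, and for $\gamma>0$, $\mathcal{M}_\gamma^{F_n,\phi}(x)=\|(x-\mathrm{prox}_{\gamma\phi}(x-\gamma\nabla F_n(x)))/\gamma\|$.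 Algorithm and assumptions: fix $x_1\in\mathrm{dom}\,\phi$ and $c\in(0,1)$. (a) $(\mu_n)\subset(0,\frac{1}{2\eta}]$ with $\mu_n\to0$, $\sum_n\mu_n=+\infty$, and there is $M\ge1$ with $M^{-1}\le\mu_{n+1}/\mu_n\le1$ for all $n$. (b) Each $\nabla F_n$ is Lipschitz continuous on $\mathrm{dom}\,\phi$ with constant $L_{\nabla F_n}=\varpi_1+\varpi_2\mu_n^{-1}$ for some fixed $\varpi_1\ge0$, $\varpi_2>0$. (c) Stepsizes $\gamma_n>0$ satisfy the Armijo-type condition $(F_n+\phi)(\mathrm{prox}_{\gamma_n\phi}(x_n-\gamma_n\nabla F_n(x_n)))\le(F_n+\phi)(x_n)-c\gamma_n(\mathcal{M}_{\gamma_n}^{F_n,\phi}(x_n))^2$, and there are $\beta>0$, $\bar\gamma>0$ with $\beta L_{\nabla F_n}^{-1}\le\gamma_n\le\bar\gamma$ for all $n$. (d) Iterates: $x_{n+1}=\mathrm{prox}_{\gamma_n\phi}(x_n-\gamma_n\nabla F_n(x_n))$. *)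

theory Defs
  imports "HOL-Analysis.Analysis"
begin

definition edom :: "('a \<Rightarrow> ereal) \<Rightarrow> 'a set" where
  "edom f = {x. f x < \<infinity>}"

definition proper_fun :: "('a \<Rightarrow> ereal) \<Rightarrow> bool" where
  "proper_fun f \<longleftrightarrow> (\<forall>x. f x \<noteq> -\<infinity>) \<and> (\<exists>x. f x < \<infinity>)"

definition lsc_fun :: "('a::topological_space \<Rightarrow> ereal) \<Rightarrow> bool" where
  "lsc_fun f \<longleftrightarrow> (\<forall>X x. X \<longlonglongrightarrow> x \<longrightarrow> f x \<le> liminf (\<lambda>n. f (X n)))"

definition econvex :: "('a::real_vector \<Rightarrow> ereal) \<Rightarrow> bool" where
  "econvex f \<longleftrightarrow> (\<forall>x y t. 0 < t \<and> t < 1 \<longrightarrow>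
      f ((1 - t) *\<^sub>R x + t *\<^sub>R y) \<le> ereal (1 - t) * f x + ereal t * f y)"

text \<open>Proximal map: the (unique, for proper lsc convex phi) minimizer.\<close>
definition prox :: "real \<Rightarrow> ('a::real_normed_vector \<Rightarrow> ereal) \<Rightarrow> 'a \<Rightarrow> 'a" where
  "prox \<gamma> \<phi> xb = (SOME x. \<forall>y. \<phi> x + ereal (norm (x - xb)^2 / (2*\<gamma>))
                              \<le> \<phi> y + ereal (norm (y - xb)^2 / (2*\<gamma>)))"

definition moreau_env :: "real \<Rightarrow> ('a::real_normed_vector \<Rightarrow> real) \<Rightarrow> 'a \<Rightarrow> real" where
  "moreau_env \<mu> g zb = (INF z. g z + norm (z - zb)^2 / (2*\<mu>))"

definition grad :: "('a::real_inner \<Rightarrow> real) \<Rightarrow> 'a \<Rightarrow> 'a" where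
  "grad f x = (THE D. GDERIV f x :> D)"

definition resid :: "real \<Rightarrow> ('a::real_inner \<Rightarrow> real) \<Rightarrow> ('a \<Rightarrow> ereal) \<Rightarrow> 'a \<Rightarrow> real" where
  "resid \<gamma> F \<phi> x = norm ((x - prox \<gamma> \<phi> (x - \<gamma> *\<^sub>R grad F x)) /\<^sub>R \<gamma>)"

end

theory Submission
  imports Defs
begin

lemma lsc_compact_lb:
  fixes \<phi> :: "'a::euclidean_space \<Rightarrow> ereal"
  assumes pr: "proper_fun \<phi>" and ls: "lsc_fun \<phi>" and K: "compact K"
  shows "\<exists>m. \<forall>y\<in>K. ereal m \<le> \<phi> y"
proof (rule ccontr)
  assume "\<not> ?thesis"
  then have "\<forall>n::nat. \<exists>y\<in>K. \<phi> y < ereal (-real n)"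
    by (metis not_le)
  then obtain Y where Y: "\<And>n. Y n \<in> K" "\<And>n. \<phi> (Y n) < ereal (-real n)"
    by metis
  obtain l r where l: "l \<in> K" "strict_mono r" "(Y \<circ> r) \<longlonglongrightarrow> l"
    using compact_imp_seq_compact[OF K] Y(1) unfolding seq_compact_def by metis
  have "((\<lambda>n. \<phi> (Y (r n))) \<longlongrightarrow> -\<infinity>) sequentially"
    unfolding tendsto_MInfty
  proof
    fix c
    obtain N::nat where N: "real N \<ge> -c" using real_arch_simple by blast
    show "eventually (\<lambda>n. \<phi> (Y (r n)) < ereal c) sequentially"
      unfolding eventually_sequentially
    proof (intro exI allI impI)
      fix n assume "n \<ge> N"
      then have "r n \<ge> N" using seq_suble[OF l(2), of n] by linarith
      then have "ereal (-real (r n)) \<le> ereal c" using N by simp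
      then show "\<phi> (Y (r n)) < ereal c" using Y(2)[of "r n"] by order
    qed
  qed
  then have "liminf (\<lambda>n. \<phi> (Y (r n))) = -\<infinity>"
    by (intro lim_imp_Liminf) auto
  moreover have "\<phi> l \<le> liminf (\<lambda>n. \<phi> ((Y \<circ> r) n))"
    using ls l(3) unfolding lsc_fun_def by blast
  ultimately have "\<phi> l = -\<infinity>" by simp
  then show False using pr unfolding proper_fun_def by blast
qed


lemma affine_lb:
  fixes \<phi> :: "'a::euclidean_space \<Rightarrow> ereal"
  assumes pr: "proper_fun \<phi>" and ls: "lsc_fun \<phi>" and cv: "econvex \<phi>"
    and y0: "\<phi> y0 = ereal f0"
  shows "\<exists>A K. K \<ge> 0 \<and> (\<forall>y. ereal (A - K * norm (y - y0)) \<le> \<phi> y)"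
proof -
  obtain m where m: "\<And>y. y \<in> cball y0 1 \<Longrightarrow> ereal m \<le> \<phi> y"
    using lsc_compact_lb[OF pr ls compact_cball] by blast
  define m' where "m' = min m f0"
  define K where "K = f0 - m'"
  have K0: "K \<ge> 0" unfolding K_def m'_def by simp
  have "ereal (f0 - K - K * norm (y - y0)) \<le> \<phi> y" for y
  proof (cases "\<phi> y")
    case PInf then show ?thesis by simp
  next
    case MInf then show ?thesis using pr unfolding proper_fun_def by blast
  next
    case (real v)
    show ?thesis
    proof (cases "norm (y - y0) \<le> 1")
      case True
      then have "ereal m \<le> \<phi> y" using m by (simp add: dist_norm norm_minus_commute)
      then have "m \<le> v" using real by simp
      moreover have "f0 - K - K * norm (y - y0) \<le> m'"
        using K0 unfolding K_def by (simp add: mult_nonneg_nonneg)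
      ultimately show ?thesis using real unfolding m'_def by simp
    next
      case False
      define r where "r = norm (y - y0)"
      have r1: "r > 1" using False r_def by simp
      define s where "s = 1 / r"
      have s: "0 < s" "s < 1" using r1 unfolding s_def by auto
      define z where "z = (1 - s) *\<^sub>R y0 + s *\<^sub>R y"
      have "z - y0 = s *\<^sub>R (y - y0)" unfolding z_def by (simp add: algebra_simps)
      then have "norm (z - y0) = 1" using r1 unfolding s_def r_def by (auto simp: norm_minus_commute)
      then have "ereal m \<le> \<phi> z" using m by (simp add: dist_norm norm_minus_commute)
      also have "\<phi> z \<le> ereal (1 - s) * \<phi> y0 + ereal s * \<phi> y"
        using cv s unfolding econvex_def z_def by blast
      finally have "m \<le> (1 - s) * f0 + s * v" using y0 real by simp
      then have "m' \<le> (1 - s) * f0 + s * v" unfolding m'_def by simp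
      then have "r * m' \<le> r * ((1 - s) * f0 + s * v)" using r1 by simp
      also have "\<dots> = (r - 1) * f0 + v" using r1 unfolding s_def by (simp add: field_simps)
      finally have "f0 - K * r \<le> v" unfolding K_def by (simp add: algebra_simps)
      then show ?thesis using real K0 unfolding r_def by simp
    qed
  qed
  then show ?thesis using K0 by blast
qed


lemma amgm_aux:
  fixes K d r t g :: real
  assumes "K \<ge> 0" "g > 0" "r - d \<le> t" "t \<ge> 0"
  shows "K * r \<le> t^2 / (4*g) + K * d + g * K^2"
proof (cases "r \<le> d")
  case True
  then have "K * r \<le> K * d" using assms by (simp add: mult_left_mono)
  moreover have "t^2/(4*g) \<ge> 0" "g * K^2 \<ge> 0" using assms by auto
  ultimately show ?thesis by linarith
next
  case False
  have "K * (r - d) \<le> K * t" using assms by (simp add: mult_left_mono)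
  moreover have "K * t \<le> t^2/(4*g) + g * K^2"
  proof -
    have "0 \<le> (t - 2*g*K)^2 / (4*g)" using assms by simp
    also have "\<dots> = t^2/(4*g) + g * K^2 - K * t" using assms
      by (simp add: field_simps power2_eq_square)
    finally show ?thesis by simp
  qed
  ultimately show ?thesis by (simp add: algebra_simps)
qed

lemma sq_bound: fixes t E :: real assumes "t \<ge> 0" "t^2 \<le> E" shows "t \<le> \<bar>E\<bar> + 1"
proof (rule ccontr)
  assume "\<not> ?thesis"
  then have "t > \<bar>E\<bar> + 1" by simp
  then have "t * t > (\<bar>E\<bar> + 1) * 1" using assms
    by (intro mult_strict_mono') auto
  then show False using assms by (simp add: power2_eq_square)
qed

lemma prox_exists:
  fixes \<phi> :: "'a::euclidean_space \<Rightarrow> ereal"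
  assumes pr: "proper_fun \<phi>" and ls: "lsc_fun \<phi>" and cv: "econvex \<phi>" and g: "\<gamma> > 0"
  shows "\<exists>p. \<forall>y. \<phi> p + ereal (norm (p - a)^2 / (2*\<gamma>)) \<le> \<phi> y + ereal (norm (y - a)^2 / (2*\<gamma>))"
proof -
  define q where "q y = norm (y - a)^2 / (2*\<gamma>)" for y
  define f where "f y = \<phi> y + ereal (q y)" for y
  obtain y0 where "\<phi> y0 < \<infinity>" using pr unfolding proper_fun_def by blast
  moreover have "\<phi> y0 \<noteq> -\<infinity>" using pr unfolding proper_fun_def by blast
  ultimately obtain f0 where f0: "\<phi> y0 = ereal f0" by (cases "\<phi> y0") auto
  obtain A K where AK: "K \<ge> 0" "\<And>y. ereal (A - K * norm (y - y0)) \<le> \<phi> y"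
    using affine_lb[OF pr ls cv f0] by blast
  define d where "d = norm (y0 - a)"
  define L0 where "L0 = A - K * d - \<gamma> * K^2"
  have lb: "ereal (L0 + norm (y - a)^2 / (4*\<gamma>)) \<le> f y" for y
  proof -
    have "norm (y - y0) - d \<le> norm (y - a)" unfolding d_def
      using norm_triangle_ineq4[of "y - a" "y0 - a"] by (simp add: algebra_simps)
    then have "K * norm (y - y0) \<le> norm (y - a)^2 / (4*\<gamma>) + K * d + \<gamma> * K^2"
      using amgm_aux[OF AK(1) g] by simp
    then have "L0 + norm (y - a)^2 / (4*\<gamma>) \<le> A - K * norm (y - y0) + q y"
      unfolding L0_def q_def by (simp add: field_simps)
    then have "ereal (L0 + norm (y - a)^2 / (4*\<gamma>)) \<le> ereal (A - K * norm (y - y0)) + ereal (q y)"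
      by simp
    also have "\<dots> \<le> f y" unfolding f_def using AK(2)[of y] by (intro add_right_mono) 
    finally show ?thesis .
  qed
  have lb0: "ereal L0 \<le> f y" for y
  proof -
    have "L0 \<le> L0 + norm (y - a)^2 / (4*\<gamma>)" using g by simp
    then have "ereal L0 \<le> ereal (L0 + norm (y - a)^2 / (4*\<gamma>))" by simp
    then show ?thesis using lb[of y] by order
  qed
  define I where "I = Inf (range f)"
  have "I \<ge> ereal L0" unfolding I_def using lb0 by (auto intro: Inf_greatest)
  moreover have "I \<le> f y" for y unfolding I_def by (simp add: INF_lower)
  moreover have "f y0 = ereal (f0 + q y0)" unfolding f_def f0 by simp
  ultimately have I1: "I \<noteq> -\<infinity>" and I2: "I \<le> ereal (f0 + q y0)" by (auto, metis)
  from I2 have "I \<noteq> \<infinity>" by auto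
  note I1 this
  then obtain I' where I': "I = ereal I'" by (cases I) auto
  have "\<forall>n::nat. \<exists>y. f y < ereal (I' + inverse (real (Suc n)))"
  proof
    fix n
    have "I < ereal (I' + inverse (real (Suc n)))" using I' by simp
    then show "\<exists>y. f y < ereal (I' + inverse (real (Suc n)))" unfolding I_def
      by (simp add: Inf_less_iff)
  qed
  then obtain Y where Y: "\<And>n. f (Y n) < ereal (I' + inverse (real (Suc n)))" by metis
  define R where "R = \<bar>4*\<gamma>*(I' + 1 - L0)\<bar> + 1"
  have YR: "Y n \<in> cball a R" for n
  proof -
    have "inverse (real (Suc n)) \<le> 1" by (simp add: inverse_le_1_iff)
    then have "ereal (I' + inverse (real (Suc n))) \<le> ereal (I' + 1)" by simp
    then have "ereal (L0 + norm (Y n - a)^2 / (4*\<gamma>)) \<le> ereal (I' + 1)"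
      using lb[of "Y n"] Y[of n] by order
    then have "norm (Y n - a)^2 / (4*\<gamma>) \<le> I' + 1 - L0" by simp
    then have "norm (Y n - a)^2 \<le> 4*\<gamma>*(I' + 1 - L0)" using g by (simp add: field_simps)
    then have "norm (Y n - a) \<le> R" unfolding R_def by (intro sq_bound) auto
    then show ?thesis by (simp add: dist_norm norm_minus_commute)
  qed
  obtain p r where pr1: "p \<in> cball a R" "strict_mono r" "(Y \<circ> r) \<longlonglongrightarrow> p"
    using compact_imp_seq_compact[OF compact_cball] YR unfolding seq_compact_def by metis
  have up: "\<phi> (Y (r n)) \<le> ereal (I' + inverse (real (Suc (r n))) - q (Y (r n)))" for n
    using Y[of "r n"] unfolding f_def by (cases "\<phi> (Y (r n))") auto
  have "(\<lambda>n. inverse (real (Suc (r n)))) \<longlonglongrightarrow> 0"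
    using LIMSEQ_subseq_LIMSEQ[OF LIMSEQ_inverse_real_of_nat pr1(2)] by (simp add: o_def)
  moreover have "(\<lambda>n. q (Y (r n))) \<longlonglongrightarrow> q p"
    unfolding q_def using pr1(3) g unfolding o_def by (intro tendsto_intros) auto
  ultimately have "(\<lambda>n. ereal (I' + inverse (real (Suc (r n))) - q (Y (r n)))) \<longlonglongrightarrow> ereal (I' + 0 - q p)"
    by (intro tendsto_intros lim_ereal[THEN iffD2]) 
  then have "liminf (\<lambda>n. ereal (I' + inverse (real (Suc (r n))) - q (Y (r n)))) = ereal (I' - q p)"
    by (intro lim_imp_Liminf) auto
  moreover have "liminf (\<lambda>n. \<phi> (Y (r n))) \<le> liminf (\<lambda>n. ereal (I' + inverse (real (Suc (r n))) - q (Y (r n))))"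
    using up by (intro Liminf_mono) auto
  moreover have "\<phi> p \<le> liminf (\<lambda>n. \<phi> ((Y \<circ> r) n))"
    using ls pr1(3) unfolding lsc_fun_def by blast
  ultimately have "\<phi> p \<le> ereal (I' - q p)" by (simp add: o_def)
  then have "f p \<le> ereal I'" unfolding f_def by (cases "\<phi> p") auto
  then have "f p \<le> f y" for y using I' \<open>\<And>y. I \<le> f y\<close> by (metis order_trans)
  then show ?thesis unfolding f_def q_def by blast
qed

lemma prox_min:
  fixes \<phi> :: "'a::euclidean_space \<Rightarrow> ereal"
  assumes pr: "proper_fun \<phi>" and ls: "lsc_fun \<phi>" and cv: "econvex \<phi>" and g: "\<gamma> > 0"
  shows "\<phi> (prox \<gamma> \<phi> a) + ereal (norm (prox \<gamma> \<phi> a - a)^2 / (2*\<gamma>)) \<le> \<phi> y + ereal (norm (y - a)^2 / (2*\<gamma>))"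
  using someI_ex[OF prox_exists[OF assms, of a]] unfolding prox_def by blast

lemma prox_finite:
  fixes \<phi> :: "'a::euclidean_space \<Rightarrow> ereal"
  assumes pr: "proper_fun \<phi>" and ls: "lsc_fun \<phi>" and cv: "econvex \<phi>" and g: "\<gamma> > 0"
  shows "\<exists>v. \<phi> (prox \<gamma> \<phi> a) = ereal v"
proof -
  obtain y0 where "\<phi> y0 < \<infinity>" using pr unfolding proper_fun_def by blast
  then have "\<phi> y0 + ereal (norm (y0 - a)^2 / (2*\<gamma>)) < \<infinity>" by simp
  then have "\<phi> (prox \<gamma> \<phi> a) + ereal (norm (prox \<gamma> \<phi> a - a)^2 / (2*\<gamma>)) < \<infinity>"
    using prox_min[OF assms, of a y0] by order
  moreover have "\<phi> (prox \<gamma> \<phi> a) \<noteq> -\<infinity>" using pr unfolding proper_fun_def by blast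
  ultimately show ?thesis by (cases "\<phi> (prox \<gamma> \<phi> a)") auto
qed


lemma small_t:
  fixes A B C :: real
  assumes C: "C \<ge> 0" and h: "\<And>t. 0 < t \<Longrightarrow> t < 1 \<Longrightarrow> A \<le> B + t * C"
  shows "A \<le> B"
proof (rule field_le_epsilon)
  fix e :: real assume e: "0 < e"
  define t where "t = min (1/2) (e / (C + 1))"
  have t: "0 < t" "t < 1" using e C unfolding t_def by auto
  have "t * C \<le> (e / (C + 1)) * C" using C unfolding t_def by (intro mult_right_mono) auto
  also have "\<dots> \<le> e" using C e by (simp add: field_simps)
  finally show "A \<le> B + e" using h[OF t] by linarith
qed

lemma prox_var:
  fixes \<phi> :: "'a::euclidean_space \<Rightarrow> ereal"
  assumes pr: "proper_fun \<phi>" and ls: "lsc_fun \<phi>" and cv: "econvex \<phi>" and g: "\<gamma> > 0"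
    and p: "p = prox \<gamma> \<phi> a" and vp: "\<phi> p = ereal vp" and vy: "\<phi> y = ereal vy"
  shows "vp + inner (a - p) (y - p) / \<gamma> \<le> vy"
proof -
  have key: "vp \<le> vy + inner (p - a) (y - p) / \<gamma> + t * (norm (y - p)^2 / (2*\<gamma>))"
    if t: "0 < t" "t < 1" for t
  proof -
    define yt where "yt = (1 - t) *\<^sub>R p + t *\<^sub>R y"
    have "\<phi> yt \<le> ereal (1 - t) * \<phi> p + ereal t * \<phi> y"
      using cv t unfolding econvex_def yt_def by blast
    then have c1: "\<phi> yt \<le> ereal ((1 - t) * vp + t * vy)" using vp vy by simp
    have "\<phi> p + ereal (norm (p - a)^2 / (2*\<gamma>)) \<le> \<phi> yt + ereal (norm (yt - a)^2 / (2*\<gamma>))"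
      using prox_min[OF pr ls cv g, of a yt] p by simp
    also have "\<dots> \<le> ereal ((1 - t) * vp + t * vy) + ereal (norm (yt - a)^2 / (2*\<gamma>))"
      using c1 by (intro add_right_mono)
    finally have "vp + norm (p - a)^2 / (2*\<gamma>) \<le> (1 - t) * vp + t * vy + norm (yt - a)^2 / (2*\<gamma>)"
      using vp by simp
    moreover have NE: "norm (yt - a)^2 = norm (p - a)^2 + 2 * t * inner (p - a) (y - p) + t^2 * norm (y - p)^2"
    proof -
    have "yt - a = (p - a) + t *\<^sub>R (y - p)" unfolding yt_def by (simp add: algebra_simps)
    then have "norm (yt - a)^2 = norm ((p - a) + t *\<^sub>R (y - p))^2" by (simp only:)
    also have "\<dots> = norm (p - a)^2 + 2 * t * inner (p - a) (y - p) + t^2 * norm (y - p)^2"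
      unfolding power2_norm_eq_inner
      by (simp add: inner_add_left inner_add_right inner_commute algebra_simps power2_eq_square)
    finally show ?thesis .
    qed
    moreover have "(norm (p - a)^2 + 2 * t * inner (p - a) (y - p) + t^2 * norm (y - p)^2) / (2*\<gamma>)
       = norm (p - a)^2 / (2*\<gamma>) + (2 * t * inner (p - a) (y - p) + t^2 * norm (y - p)^2) / (2*\<gamma>)"
      by (simp add: add_divide_distrib)
    ultimately have "t * vp \<le> t * vy + (2 * t * inner (p - a) (y - p) + t^2 * norm (y - p)^2) / (2*\<gamma>)"
      by (simp add: algebra_simps)
    also have "\<dots> = t * (vy + inner (p - a) (y - p) / \<gamma> + t * (norm (y - p)^2 / (2*\<gamma>)))"
      using g by (simp add: field_simps power2_eq_square)
    finally show ?thesis using t by simp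
  qed
  have "vp \<le> vy + inner (p - a) (y - p) / \<gamma>"
    by (rule small_t[OF _ key]) (use g in auto)
  moreover have "inner (p - a) (y - p) = - inner (a - p) (y - p)" by (simp add: inner_diff_left)
  ultimately show ?thesis by simp
qed

lemma resid_mono:
  fixes \<phi> :: "'a::euclidean_space \<Rightarrow> ereal"
  assumes pr: "proper_fun \<phi>" and ls: "lsc_fun \<phi>" and cv: "econvex \<phi>"
    and g: "0 < \<gamma>" "\<gamma> \<le> \<gamma>'"
  shows "resid \<gamma>' F \<phi> x \<le> resid \<gamma> F \<phi> x"
proof -
  define d where "d = grad F x"
  define p where "p = prox \<gamma> \<phi> (x - \<gamma> *\<^sub>R d)"
  define q where "q = prox \<gamma>' \<phi> (x - \<gamma>' *\<^sub>R d)"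
  have g': "\<gamma>' > 0" using g by simp
  obtain vp where vp: "\<phi> p = ereal vp" using prox_finite[OF pr ls cv g(1)] p_def by blast
  obtain vq where vq: "\<phi> q = ereal vq" using prox_finite[OF pr ls cv g'] q_def by blast
  have i1: "vp + inner ((x - \<gamma> *\<^sub>R d) - p) (q - p) / \<gamma> \<le> vq"
    using prox_var[OF pr ls cv g(1) p_def vp vq] .
  have i2: "vq + inner ((x - \<gamma>' *\<^sub>R d) - q) (p - q) / \<gamma>' \<le> vp"
    using prox_var[OF pr ls cv g' q_def vq vp] .
  define u where "u = (x - p) /\<^sub>R \<gamma>"
  define v where "v = (x - q) /\<^sub>R \<gamma>'"
  have pu: "p = x - \<gamma> *\<^sub>R u" using g unfolding u_def by simp
  have qv: "q = x - \<gamma>' *\<^sub>R v" using g' unfolding v_def by simp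
  have e1: "inner ((x - \<gamma> *\<^sub>R d) - p) (q - p) / \<gamma> = inner (u - d) (q - p)"
    using g unfolding pu by (simp add: inner_diff_left algebra_simps field_simps)
  have e2: "inner ((x - \<gamma>' *\<^sub>R d) - q) (p - q) / \<gamma>' = inner (v - d) (p - q)"
    using g' unfolding qv by (simp add: inner_diff_left algebra_simps field_simps)
  have "inner (u - d) (q - p) + inner (v - d) (p - q) \<le> 0" using i1 i2 e1 e2 by linarith
  then have "inner (u - v) (p - q) \<ge> 0"
    by (simp add: inner_diff_left inner_diff_right algebra_simps)
  then have "inner (u - v) (\<gamma>' *\<^sub>R v - \<gamma> *\<^sub>R u) \<ge> 0" unfolding pu qv by simp
  then have H: "\<gamma>' * (v \<bullet> v) + \<gamma> * (u \<bullet> u) \<le> (\<gamma> + \<gamma>') * (u \<bullet> v)"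
    by (simp add: inner_diff_left inner_diff_right inner_commute algebra_simps)
  have "u \<bullet> v \<le> norm u * norm v" by (rule norm_cauchy_schwarz)
  then have "(\<gamma> + \<gamma>') * (u \<bullet> v) \<le> (\<gamma> + \<gamma>') * (norm u * norm v)"
    using g by (intro mult_left_mono) auto
  with H have H2: "\<gamma>' * norm v ^2 + \<gamma> * norm u ^2 \<le> (\<gamma> + \<gamma>') * (norm u * norm v)"
    by (simp add: power2_norm_eq_inner)
  have "norm v \<le> norm u"
  proof (rule ccontr)
    assume "\<not> ?thesis"
    then have b: "norm v > norm u" by simp
    have "(\<gamma>' * norm v - \<gamma> * norm u) * (norm v - norm u) > 0"
    proof (rule mult_pos_pos)
      have "\<gamma> * norm u \<le> \<gamma>' * norm u" using g by (intro mult_right_mono) auto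
      also have "\<dots> < \<gamma>' * norm v" using g' b by simp
      finally show "\<gamma>' * norm v - \<gamma> * norm u > 0" by simp
    qed (use b in simp)
    then show False using H2 by (simp add: algebra_simps power2_eq_square)
  qed
  then show ?thesis unfolding resid_def u_def v_def p_def q_def d_def .
qed


lemma lip_le:
  fixes g :: "'z::real_normed_vector \<Rightarrow> real"
  assumes "lipschitz_on L UNIV g"
  shows "g w \<le> g z + L * norm (w - z)"
  using lipschitz_onD[OF assms, of w z] by (simp add: dist_real_def dist_norm abs_le_iff)

lemma moreau_lb_pt:
  fixes g :: "'z::real_normed_vector \<Rightarrow> real"
  assumes lip: "lipschitz_on L UNIV g" and mu: "\<mu> > 0"
  shows "g z - \<mu> * L^2 / 2 \<le> g w + norm (w - z)^2 / (2*\<mu>)"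
proof -
  define r where "r = norm (w - z)"
  have "g z \<le> g w + L * r" using lip_le[OF lip, of z w] unfolding r_def by (simp add: norm_minus_commute)
  moreover have "L * r \<le> r^2 / (2*\<mu>) + \<mu> * L^2 / 2"
  proof -
    have "0 \<le> (r - \<mu> * L)^2 / (2*\<mu>)" using mu by simp
    also have "\<dots> = r^2 / (2*\<mu>) + \<mu> * L^2 / 2 - L * r" using mu
      by (simp add: field_simps power2_eq_square)
    finally show ?thesis by simp
  qed
  ultimately show ?thesis unfolding r_def by linarith
qed

lemma moreau_bdd:
  fixes g :: "'z::real_normed_vector \<Rightarrow> real"
  assumes lip: "lipschitz_on L UNIV g" and mu: "\<mu> > 0"
  shows "bdd_below (range (\<lambda>w. g w + norm (w - z)^2 / (2*\<mu>)))"
  using moreau_lb_pt[OF lip mu, of z] by (intro bdd_belowI[where m = "g z - \<mu> * L^2 / 2"]) auto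

lemma moreau_lb:
  fixes g :: "'z::real_normed_vector \<Rightarrow> real"
  assumes lip: "lipschitz_on L UNIV g" and mu: "\<mu> > 0"
  shows "g z - \<mu> * L^2 / 2 \<le> moreau_env \<mu> g z"
  unfolding moreau_env_def using moreau_lb_pt[OF lip mu, of z] by (intro cINF_greatest) auto

lemma moreau_ub:
  fixes g :: "'z::real_normed_vector \<Rightarrow> real"
  assumes lip: "lipschitz_on L UNIV g" and mu: "\<mu> > 0"
  shows "moreau_env \<mu> g z \<le> g z"
proof -
  have "moreau_env \<mu> g z \<le> g z + norm (z - z)^2 / (2*\<mu>)"
    unfolding moreau_env_def by (rule cINF_lower[OF moreau_bdd[OF lip mu]]) auto
  then show ?thesis by simp
qed

lemma moreau_mono:
  fixes g :: "'z::real_normed_vector \<Rightarrow> real"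
  assumes lip: "lipschitz_on L UNIV g" and mu: "0 < \<mu>'" "\<mu>' \<le> \<mu>"
  shows "moreau_env \<mu>' g z \<le> moreau_env \<mu> g z + (\<mu> - \<mu>') * L^2 / 2"
proof -
  have mu0: "\<mu> > 0" using mu by simp
  have L0: "L \<ge> 0" using lipschitz_on_nonneg[OF lip] .
  define t where "t = \<mu>' / \<mu>"
  have t: "0 < t" "t \<le> 1" using mu unfolding t_def by auto
  have "moreau_env \<mu>' g z - (\<mu> - \<mu>') * L^2 / 2 \<le> g w + norm (w - z)^2 / (2*\<mu>)" for w
  proof -
    define r where "r = norm (w - z)"
    define w' where "w' = z + t *\<^sub>R (w - z)"
    have "moreau_env \<mu>' g z \<le> g w' + norm (w' - z)^2 / (2*\<mu>')"
      unfolding moreau_env_def by (rule cINF_lower[OF moreau_bdd[OF lip mu(1)]]) auto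
    moreover have "norm (w' - z) = t * r" unfolding w'_def r_def using t by simp
    moreover have "norm (w' - w) = (1 - t) * r"
    proof -
      have "w' - w = (1 - t) *\<^sub>R (z - w)" unfolding w'_def by (simp add: algebra_simps)
      then show ?thesis unfolding r_def using t by (simp add: norm_minus_commute)
    qed
    then have "g w' \<le> g w + L * ((1 - t) * r)" using lip_le[OF lip, of w' w] by simp
    ultimately have A: "moreau_env \<mu>' g z \<le> g w + L * ((1 - t) * r) + (t * r)^2 / (2*\<mu>')" by simp
    have B: "(t * r)^2 / (2*\<mu>') = t * r^2 / (2*\<mu>)" unfolding t_def using mu mu0
      by (simp add: field_simps power2_eq_square)
    have C: "L * r \<le> r^2 / (2*\<mu>) + \<mu> * L^2 / 2"
    proof -
      have "0 \<le> (r - \<mu> * L)^2 / (2*\<mu>)" using mu0 by simp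
      also have "\<dots> = r^2 / (2*\<mu>) + \<mu> * L^2 / 2 - L * r" using mu0
        by (simp add: field_simps power2_eq_square)
      finally show ?thesis by simp
    qed
    have "(1 - t) * (L * r) \<le> (1 - t) * (r^2 / (2*\<mu>) + \<mu> * L^2 / 2)"
      using C t by (intro mult_left_mono) auto
    moreover have "(1 - t) * (r^2 / (2*\<mu>) + \<mu> * L^2 / 2) = r^2 / (2*\<mu>) - t * r^2 / (2*\<mu>) + (\<mu> - \<mu>') * L^2 / 2"
      unfolding t_def using mu0 by (simp add: field_simps)
    moreover have "L * ((1 - t) * r) = (1 - t) * (L * r)" by simp
    ultimately have "L * ((1 - t) * r) + t * r^2 / (2*\<mu>) \<le> r^2 / (2*\<mu>) + (\<mu> - \<mu>') * L^2 / 2"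
      by linarith
    then show ?thesis using A B unfolding r_def by linarith
  qed
  then have "moreau_env \<mu>' g z - (\<mu> - \<mu>') * L^2 / 2 \<le> moreau_env \<mu> g z"
    unfolding moreau_env_def[of \<mu>] by (intro cINF_greatest) auto
  then show ?thesis by simp
qed

theorem theorem2:
  fixes \<phi> :: "'x::euclidean_space \<Rightarrow> ereal"
    and h :: "'x \<Rightarrow> real"
    and S :: "'x \<Rightarrow> 'z::euclidean_space"
    and g :: "'z \<Rightarrow> real"
    and \<mu> \<gamma> :: "nat \<Rightarrow> real"
    and x :: "nat \<Rightarrow> 'x"
    and Lg \<eta> c M w1 w2 \<beta> \<gamma>bar :: real
  defines "F \<equiv> (\<lambda>y. h y + g (S y))"
    and "Fn \<equiv> (\<lambda>n y. h y + moreau_env (\<mu> n) g (S y))"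
  assumes phi_proper: "proper_fun \<phi>" and phi_lsc: "lsc_fun \<phi>" and phi_convex: "econvex \<phi>"
    and h_diff: "\<And>y. h differentiable (at y)"
    and h_lip: "\<exists>L. lipschitz_on L (edom \<phi>) (grad h)"
    and S_C1: "\<exists>S'. (\<forall>y. (S has_derivative blinfun_apply (S' y)) (at y)) \<and> continuous_on UNIV S'"
    and g_lip: "Lg > 0" "lipschitz_on Lg UNIV g"
    and g_weak: "\<eta> > 0" "convex_on UNIV (\<lambda>z. g z + \<eta> / 2 * norm z ^ 2)"
    and argmin_ne: "\<exists>xs. \<forall>y. ereal (F xs) + \<phi> xs \<le> ereal (F y) + \<phi> y"
    and x1: "x 1 \<in> edom \<phi>"
    and c: "0 < c" "c < 1"
    and mu_pos: "\<And>n. n \<ge> 1 \<Longrightarrow> 0 < \<mu> n \<and> \<mu> n \<le> 1 / (2 * \<eta>)"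
    and mu_lim: "(\<lambda>n. \<mu> n) \<longlonglongrightarrow> 0"
    and mu_div: "\<not> summable \<mu>"
    and M: "M \<ge> 1"
    and mu_ratio: "\<And>n. n \<ge> 1 \<Longrightarrow> 1 / M \<le> \<mu> (Suc n) / \<mu> n \<and> \<mu> (Suc n) / \<mu> n \<le> 1"
    and varpi: "w1 \<ge> 0" "w2 > 0"
    and Fn_lip: "\<And>n. n \<ge> 1 \<Longrightarrow> lipschitz_on (w1 + w2 / \<mu> n) (edom \<phi>) (grad (Fn n))"
    and armijo: "\<And>n. n \<ge> 1 \<Longrightarrow>
        ereal (Fn n (prox (\<gamma> n) \<phi> (x n - \<gamma> n *\<^sub>R grad (Fn n) (x n))))
          + \<phi> (prox (\<gamma> n) \<phi> (x n - \<gamma> n *\<^sub>R grad (Fn n) (x n)))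
        \<le> ereal (Fn n (x n)) + \<phi> (x n) - ereal (c * \<gamma> n * (resid (\<gamma> n) (Fn n) \<phi> (x n))^2)"
    and gamma_bounds: "\<beta> > 0" "\<gamma>bar > 0"
      "\<And>n. n \<ge> 1 \<Longrightarrow> \<beta> / (w1 + w2 / \<mu> n) \<le> \<gamma> n \<and> \<gamma> n \<le> \<gamma>bar"
    and iter: "\<And>n. n \<ge> 1 \<Longrightarrow> x (Suc n) = prox (\<gamma> n) \<phi> (x n - \<gamma> n *\<^sub>R grad (Fn n) (x n))"
  shows "\<exists>chi>0. \<forall>klo khi::nat. 1 \<le> klo \<and> klo \<le> khi \<longrightarrow>
           (MIN n\<in>{klo..khi}. resid \<gamma>bar (Fn n) \<phi> (x n))
             \<le> sqrt (chi / (\<Sum>n=klo..khi. \<mu> n))"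
proof -
  have Lg0: "Lg \<ge> 0" using g_lip by simp
  have mupos: "\<And>n. n \<ge> 1 \<Longrightarrow> 0 < \<mu> n" using mu_pos by blast
  have mule: "\<And>n. n \<ge> 1 \<Longrightarrow> \<mu> n \<le> 1 / (2 * \<eta>)" using mu_pos by blast
  have musuc: "\<And>n. n \<ge> 1 \<Longrightarrow> \<mu> (Suc n) \<le> \<mu> n"
  proof -
    fix n :: nat assume n: "n \<ge> 1"
    have "\<mu> (Suc n) / \<mu> n \<le> 1" using mu_ratio[OF n] by blast
    then show "\<mu> (Suc n) \<le> \<mu> n" using mupos[OF n] by (simp add: divide_le_eq_1)
  qed
  define \<kappa> where "\<kappa> = \<beta> / (w1 / (2 * \<eta>) + w2)"
  have "w1 / (2 * \<eta>) \<ge> 0" using varpi g_weak(1) by simp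
  then have kpos: "\<kappa> > 0" unfolding \<kappa>_def using gamma_bounds(1) varpi
    by (intro divide_pos_pos) auto
  have gam_lb: "\<kappa> * \<mu> n \<le> \<gamma> n" if n: "n \<ge> 1" for n
  proof -
    have mp: "\<mu> n > 0" using mupos[OF n] .
    have "\<beta> / (w1 + w2 / \<mu> n) = \<beta> * \<mu> n / (w1 * \<mu> n + w2)"
      using mp by (simp add: field_simps)
    also have "\<dots> \<ge> \<beta> * \<mu> n / (w1 / (2 * \<eta>) + w2)"
    proof (rule divide_left_mono)
      show "w1 * \<mu> n + w2 \<le> w1 / (2 * \<eta>) + w2"
        using mult_left_mono[OF mule[OF n] varpi(1)] by simp
      show "0 \<le> \<beta> * \<mu> n" using gamma_bounds(1) mp by simp
      show "0 < (w1 / (2 * \<eta>) + w2) * (w1 * \<mu> n + w2)"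
        using varpi mp g_weak(1) by (intro mult_pos_pos add_nonneg_pos) auto
    qed
    finally have "\<beta> * \<mu> n / (w1 / (2 * \<eta>) + w2) \<le> \<gamma> n" using gamma_bounds(3)[OF n] by linarith
    then show ?thesis unfolding \<kappa>_def by (simp add: field_simps)
  qed
  have gpos: "\<gamma> n > 0" if "n \<ge> 1" for n
    using gam_lb[OF that] mult_pos_pos[OF kpos mupos[OF that]] by linarith
  have fin: "\<exists>v. \<phi> (x n) = ereal v" if "n \<ge> 1" for n
    using that
  proof (induction n rule: dec_induct)
    case base
    have "\<phi> (x 1) < \<infinity>" using x1 unfolding edom_def by simp
    moreover have "\<phi> (x 1) \<noteq> -\<infinity>" using phi_proper unfolding proper_fun_def by blast
    ultimately show ?case by (cases "\<phi> (x 1)") auto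
  next
    case (step m)
    show ?case unfolding iter[OF step(1)]
      by (rule prox_finite[OF phi_proper phi_lsc phi_convex gpos[OF step(1)]])
  qed
  define v where "v n = real_of_ereal (\<phi> (x n))" for n
  have phv: "\<phi> (x n) = ereal (v n)" if "n \<ge> 1" for n
    using fin[OF that] unfolding v_def by auto
  define R where "R n = resid (\<gamma> n) (Fn n) \<phi> (x n)" for n
  define E where "E n = Fn n (x n) + v n + \<mu> n * Lg^2 / 2" for n
  have Fn_mono: "Fn (Suc n) y \<le> Fn n y + (\<mu> n - \<mu> (Suc n)) * Lg^2 / 2" if n: "n \<ge> 1" for n y
    unfolding Fn_def using moreau_mono[OF g_lip(2) mupos[of "Suc n"] musuc[OF n], of "S y"] n by simp
  have Edec: "E (Suc n) \<le> E n - c * \<gamma> n * (R n)^2" if n: "n \<ge> 1" for n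
  proof -
    have "ereal (Fn n (x (Suc n))) + \<phi> (x (Suc n)) \<le> ereal (Fn n (x n)) + \<phi> (x n) - ereal (c * \<gamma> n * (R n)^2)"
      using armijo[OF n] unfolding iter[OF n, symmetric] R_def .
    then have "Fn n (x (Suc n)) + v (Suc n) \<le> Fn n (x n) + v n - c * \<gamma> n * (R n)^2"
      using phv[OF n] phv[of "Suc n"] n by simp
    moreover have "(\<mu> n - \<mu> (Suc n)) * Lg^2 / 2 = \<mu> n * Lg^2 / 2 - \<mu> (Suc n) * Lg^2 / 2"
      by (simp add: left_diff_distrib diff_divide_distrib)
    ultimately show ?thesis unfolding E_def using Fn_mono[OF n, of "x (Suc n)"] by linarith
  qed
  have Rnn: "R n \<ge> 0" for n unfolding R_def resid_def by simp
  have Enonincr: "E k \<le> E 1" if "k \<ge> 1" for k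
    using that
  proof (induction k rule: dec_induct)
    case base then show ?case by simp
  next
    case (step m)
    have "c * \<gamma> m * (R m)^2 \<ge> 0" using c gpos[OF step(1)] by simp
    then show ?case using Edec[OF step(1)] step(3) by linarith
  qed
  obtain xs where xs: "\<And>y. ereal (F xs) + \<phi> xs \<le> ereal (F y) + \<phi> y" using argmin_ne by blast
  obtain B where B: "\<And>n. n \<ge> 1 \<Longrightarrow> B \<le> F (x n) + v n"
  proof (cases "\<phi> xs")
    case (real w)
    show ?thesis
    proof (rule that[of "F xs + w"])
      fix n :: nat assume n: "n \<ge> 1"
      show "F xs + w \<le> F (x n) + v n" using xs[of "x n"] real phv[OF n] by simp
    qed
  next
    case PInf
    then have False using xs[of "x 1"] phv[of 1] by simp
    then show ?thesis ..
  next
    case MInf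
    then show ?thesis using phi_proper unfolding proper_fun_def by blast
  qed
  have Elb: "B \<le> E n" if n: "n \<ge> 1" for n
  proof -
    have "g (S (x n)) - \<mu> n * Lg^2 / 2 \<le> moreau_env (\<mu> n) g (S (x n))"
      using moreau_lb[OF g_lip(2) mupos[OF n]] .
    then have "F (x n) \<le> Fn n (x n) + \<mu> n * Lg^2 / 2" unfolding F_def Fn_def by simp
    then show ?thesis using B[OF n] unfolding E_def by linarith
  qed
  define C where "C = E 1 - B"
  have sumb: "(\<Sum>n=klo..klo+m. c * \<gamma> n * (R n)^2) \<le> E klo - E (Suc (klo + m))"
    if k: "klo \<ge> 1" for klo m
  proof (induction m)
    case 0 then show ?case using Edec[OF k] by simp
  next
    case (Suc m)
    have "(\<Sum>n=klo..klo+Suc m. c * \<gamma> n * (R n)^2)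
        = (\<Sum>n=klo..klo+m. c * \<gamma> n * (R n)^2) + c * \<gamma> (Suc (klo + m)) * (R (Suc (klo + m)))^2"
      by simp
    then show ?case using Suc Edec[of "Suc (klo + m)"] by simp
  qed
  define chi where "chi = (\<bar>C\<bar> + 1) / (c * \<kappa>)"
  have chipos: "chi > 0" unfolding chi_def using c kpos by simp
  show ?thesis
  proof (intro exI[of _ chi] conjI chipos allI impI)
    fix klo khi :: nat assume kk: "1 \<le> klo \<and> klo \<le> khi"
    define A where "A = {klo..khi}"
    have Afin: "finite A" and Ane: "A \<noteq> {}" unfolding A_def using kk by auto
    define m where "m = (MIN n\<in>A. resid \<gamma>bar (Fn n) \<phi> (x n))"
    have "m \<in> (\<lambda>n. resid \<gamma>bar (Fn n) \<phi> (x n)) ` A" unfolding m_def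
      by (rule Min_in) (use Afin Ane in auto)
    then obtain n0 where "n0 \<in> A" "m = resid \<gamma>bar (Fn n0) \<phi> (x n0)" by blast
    then have m0: "m \<ge> 0" unfolding resid_def by simp
    have mle: "m \<le> R n" if "n \<in> A" for n
    proof -
      have n1: "n \<ge> 1" using that kk unfolding A_def by auto
      have "m \<le> resid \<gamma>bar (Fn n) \<phi> (x n)" unfolding m_def using Afin that by simp
      also have "\<dots> \<le> R n" unfolding R_def
        using resid_mono[OF phi_proper phi_lsc phi_convex gpos[OF n1]] gamma_bounds(3)[OF n1] by blast
      finally show ?thesis .
    qed
    have trm: "c * \<kappa> * m^2 * \<mu> n \<le> c * \<gamma> n * (R n)^2" if "n \<in> A" for n
    proof -
      have n1: "n \<ge> 1" using that kk unfolding A_def by auto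
      have "m^2 \<le> (R n)^2" using mle[OF that] m0 by (intro power_mono) auto
      moreover have "\<kappa> * \<mu> n \<le> \<gamma> n" using gam_lb[OF n1] .
      ultimately have "(\<kappa> * \<mu> n) * m^2 \<le> \<gamma> n * (R n)^2"
        using kpos mupos[OF n1] gpos[OF n1] by (intro mult_mono) auto
      then have "c * ((\<kappa> * \<mu> n) * m^2) \<le> c * (\<gamma> n * (R n)^2)" using c by (intro mult_left_mono) auto
      then show ?thesis by (simp add: algebra_simps)
    qed
    have "c * \<kappa> * m^2 * (\<Sum>n\<in>A. \<mu> n) = (\<Sum>n\<in>A. c * \<kappa> * m^2 * \<mu> n)"
      by (simp add: sum_distrib_left)
    also have "\<dots> \<le> (\<Sum>n\<in>A. c * \<gamma> n * (R n)^2)" by (intro sum_mono trm)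
    also have "\<dots> \<le> E klo - E (Suc khi)"
    proof -
      have eq: "klo + (khi - klo) = khi" using kk by simp
      show ?thesis unfolding A_def using sumb[of klo "khi - klo", unfolded eq] kk by blast
    qed
    also have "\<dots> \<le> C" unfolding C_def using Enonincr[of klo] Elb[of "Suc khi"] kk by simp
    also have "\<dots> \<le> \<bar>C\<bar> + 1" by simp
    finally have main: "c * \<kappa> * m^2 * (\<Sum>n\<in>A. \<mu> n) \<le> \<bar>C\<bar> + 1" .
    have spos: "(\<Sum>n\<in>A. \<mu> n) > 0"
    proof (rule sum_pos[OF Afin Ane])
      fix n assume "n \<in> A"
      then have "n \<ge> 1" using kk unfolding A_def by auto
      then show "\<mu> n > 0" by (rule mupos)
    qed
    have "m^2 \<le> chi / (\<Sum>n\<in>A. \<mu> n)"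
      unfolding chi_def using main spos c kpos by (simp add: field_simps)
    then have "sqrt (m^2) \<le> sqrt (chi / (\<Sum>n\<in>A. \<mu> n))" by (rule real_sqrt_le_mono)
    then show "(MIN n\<in>{klo..khi}. resid \<gamma>bar (Fn n) \<phi> (x n)) \<le> sqrt (chi / (\<Sum>n=klo..khi. \<mu> n))"
      using m0 unfolding m_def A_def by simp
  qed
qed

end
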